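(* Let $I:(0,1)\to(0,1)$ be a nondecreasing function. Then $I$ satisfies $$\int_0^t\frac{ds}{I(s)}\lesssim\frac{t}{I(t)},\quad t\in(0,1),$$ if and only if $$\sup_{0<s\le t}I(s)f^{**}(s)\approx\sup_{0<s\le t}I(s)f^*(s),\quad f\in\mathcal M_+(0,1),\ t\in(0,1).$$ In this case $m_I=M_I$ with equivalent norms.
   Context: $\mathcal M_+(0,1)$: nonnegative measurable functions on $(0,1)$; $f^*$ the nonincreasing rearrangement; $f^{**}(t)=\frac1t\int_0^tf^*(s)ds$. $\|f\|_{m_I}=\sup_{0<t<1}I(t)f^*(t)$, $\|f\|_{M_I}=\sup_{0<t<1}I(t)f^{**}(t)$, with $m_I$, $M_I$ the corresponding sets of functions with finite quantity. $\lesssim$, $\approx$ denote inequalities up to constants independent of $f$ and $t$. *)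

theory Defs
  imports "HOL-Analysis.Analysis"
begin

text \<open>Nonnegative (possibly infinite-valued) Lebesgue measurable functions on (0,1).
  Values outside (0,1) are irrelevant: everything below only looks at (0,1).\<close>
definition Mplus :: "(real \<Rightarrow> ennreal) set" where
  "Mplus = borel_measurable lborel"

definition distr_fn :: "(real \<Rightarrow> ennreal) \<Rightarrow> ennreal \<Rightarrow> ennreal" where
  "distr_fn f s = emeasure lborel {x \<in> {0<..<1}. s < f x}"

definition rearr :: "(real \<Rightarrow> ennreal) \<Rightarrow> real \<Rightarrow> ennreal" where
  "rearr f t = Inf {s. distr_fn f s \<le> ennreal t}"

definition maxfn :: "(real \<Rightarrow> ennreal) \<Rightarrow> real \<Rightarrow> ennreal" where
  "maxfn f t = (\<integral>\<^sup>+ s. rearr f s * indicator {0<..<t} s \<partial>lborel) / ennreal t"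

definition norm_m :: "(real \<Rightarrow> real) \<Rightarrow> (real \<Rightarrow> ennreal) \<Rightarrow> ennreal" where
  "norm_m I f = (SUP t\<in>{0<..<1}. ennreal (I t) * rearr f t)"

definition norm_M :: "(real \<Rightarrow> real) \<Rightarrow> (real \<Rightarrow> ennreal) \<Rightarrow> ennreal" where
  "norm_M I f = (SUP t\<in>{0<..<1}. ennreal (I t) * maxfn f t)"

definition space_m :: "(real \<Rightarrow> real) \<Rightarrow> (real \<Rightarrow> ennreal) set" where
  "space_m I = {f \<in> Mplus. norm_m I f < \<infinity>}"

definition space_M :: "(real \<Rightarrow> real) \<Rightarrow> (real \<Rightarrow> ennreal) set" where
  "space_M I = {f \<in> Mplus. norm_M I f < \<infinity>}"

end

theory Submission
  imports Defs
begin

lemma meas_invI: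
  fixes I :: "real \<Rightarrow> real"
  assumes range: "\<And>t. t \<in> {0<..<1} \<Longrightarrow> I t \<in> {0<..<1}"
    and mono: "mono_on {0<..<1} I" and t: "t \<le> 1"
  shows "(\<lambda>v. ennreal (1 / I v) * indicator {0<..<t} v) \<in> borel_measurable borel"
proof -
  define J where "J v = (if v \<in> {0<..<1} then I v else if v \<le> 0 then -1 else 2)" for v
  have "mono J"
  proof (rule monoI)
    fix x y :: real assume "x \<le> y"
    then show "J x \<le> J y" unfolding J_def
      using range[of x] range[of y] mono_onD[OF mono, of x y] by auto
  qed
  then have [measurable]: "J \<in> borel_measurable borel" by (rule borel_measurable_mono)
  have "(\<lambda>v. ennreal (1 / J v) * indicator {0<..<t} v) \<in> borel_measurable borel" by measurable
  moreover have "(\<lambda>v. ennreal (1 / J v) * indicator {0<..<t} v) = (\<lambda>v. ennreal (1 / I v) * indicator {0<..<t} v)"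
    using t by (auto simp: J_def indicator_def fun_eq_iff)
  ultimately show ?thesis by simp
qed

lemma rearr_antimono: "s \<le> s' \<Longrightarrow> rearr f s' \<le> rearr f s"
  unfolding rearr_def by (rule Inf_superset_mono) (auto intro: order_trans[OF _ ennreal_leI])

lemma rearr_le_maxfn:
  assumes s: "0 < s" shows "rearr f s \<le> maxfn f s"
proof -
  have "rearr f s * ennreal s = (\<integral>\<^sup>+ u. rearr f s * indicator {0<..<s} u \<partial>lborel)"
    using s by (simp add: nn_integral_cmult_indicator)
  also have "\<dots> \<le> (\<integral>\<^sup>+ u. rearr f u * indicator {0<..<s} u \<partial>lborel)"
    by (rule nn_integral_mono) (auto simp: indicator_def intro: rearr_antimono)
  finally have "rearr f s * ennreal s / ennreal s \<le> maxfn f s"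
    unfolding maxfn_def by (rule divide_right_mono_ennreal)
  then show ?thesis using s by (simp add: ennreal_mult_divide_eq)
qed

lemma AtoB_point:
  fixes I :: "real \<Rightarrow> real"
  assumes range: "\<And>t. t \<in> {0<..<1} \<Longrightarrow> I t \<in> {0<..<1}"
    and mono: "mono_on {0<..<1} I" and C: "C > 0"
    and A: "\<forall>t\<in>{0<..<1}. (\<integral>\<^sup>+ s. ennreal (1 / I s) * indicator {0<..<t} s \<partial>lborel) \<le> ennreal (C * t / I t)"
    and t: "t < 1" and s: "s \<in> {0<..t}"
  shows "ennreal (I s) * maxfn f s \<le> ennreal C * (SUP u\<in>{0<..t}. ennreal (I u) * rearr f u)"
proof -
  define K where "K = (SUP u\<in>{0<..t}. ennreal (I u) * rearr f u)"
  have s01: "s \<in> {0<..<1}" using s t by auto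
  have Is: "I s > 0" using range[OF s01] by auto
  have pt: "rearr f u * indicator {0<..<s} u \<le> K * (ennreal (1 / I u) * indicator {0<..<s} u)" for u
  proof (cases "u \<in> {0<..<s}")
    case True
    then have u: "u \<in> {0<..t}" "u \<in> {0<..<1}" using s t by auto
    have Iu: "I u > 0" using range[OF u(2)] by auto
    have "ennreal (I u) * rearr f u \<le> K" unfolding K_def by (rule SUP_upper[OF u(1)])
    then have "ennreal (1 / I u) * (ennreal (I u) * rearr f u) \<le> ennreal (1 / I u) * K"
      by (rule mult_left_mono) simp
    also have "ennreal (1 / I u) * (ennreal (I u) * rearr f u) = rearr f u"
      using Iu by (simp add: mult.assoc[symmetric] ennreal_mult[symmetric])
    finally show ?thesis using True by (simp add: mult.commute)
  qed (simp)
  have "(\<integral>\<^sup>+ u. rearr f u * indicator {0<..<s} u \<partial>lborel)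
        \<le> (\<integral>\<^sup>+ u. K * (ennreal (1 / I u) * indicator {0<..<s} u) \<partial>lborel)"
    by (rule nn_integral_mono) (rule pt)
  also have "\<dots> = K * (\<integral>\<^sup>+ u. ennreal (1 / I u) * indicator {0<..<s} u \<partial>lborel)"
    using meas_invI[OF range mono, of s] s t by (subst nn_integral_cmult) auto
  also have "\<dots> \<le> K * ennreal (C * s / I s)"
    using A s01 by (intro mult_left_mono) auto
  finally have "maxfn f s \<le> K * ennreal (C * s / I s) / ennreal s"
    unfolding maxfn_def by (rule divide_right_mono_ennreal)
  also have "\<dots> = K * ennreal (C / I s)"
    using s Is C by (simp add: ennreal_times_divide[symmetric] divide_ennreal)
  finally have "ennreal (I s) * maxfn f s \<le> ennreal (I s) * (K * ennreal (C / I s))"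
    by (rule mult_left_mono) simp
  also have "\<dots> = K * ennreal C"
  proof -
    have "ennreal (I s) * ennreal (C / I s) = ennreal C"
      using Is C by (simp add: ennreal_mult[symmetric])
    then show ?thesis by (metis mult.assoc mult.commute)
  qed
  finally show ?thesis unfolding K_def by (simp add: mult.commute)
qed

lemma BtoA_point:
  fixes I :: "real \<Rightarrow> real"
  assumes range: "\<And>t. t \<in> {0<..<1} \<Longrightarrow> I t \<in> {0<..<1}"
    and mono: "mono_on {0<..<1} I" and C: "C > 0"
    and B: "\<forall>f\<in>Mplus. \<forall>t\<in>{0<..<1}.
             (SUP s\<in>{0<..t}. ennreal (I s) * maxfn f s) \<le> ennreal C * (SUP s\<in>{0<..t}. ennreal (I s) * rearr f s)"
    and t: "t \<in> {0<..<1}"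
  shows "(\<integral>\<^sup>+ s. ennreal (1 / I s) * indicator {0<..<t} s \<partial>lborel) \<le> ennreal (2 * C * t / I t)"
proof -
  define f where "f v = ennreal (1 / I v) * indicator {0<..<t} v" for v
  have fm[measurable]: "f \<in> borel_measurable borel"
    unfolding f_def using meas_invI[OF range mono, of t] t by auto
  then have fM: "f \<in> Mplus" by (simp add: Mplus_def)
  have It: "I t > 0" using range[OF t] by auto
  have up: "rearr f s \<le> ennreal (1 / I s)" if s: "s \<in> {0<..t}" for s
  proof -
    have s01: "s \<in> {0<..<1}" using s t by auto
    have Is: "I s > 0" using range[OF s01] by auto
    have "{x \<in> {0<..<1}. ennreal (1 / I s) < f x} \<subseteq> {0<..<s}"
    proof
      fix x assume x: "x \<in> {x \<in> {0<..<1}. ennreal (1 / I s) < f x}"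
      show "x \<in> {0<..<s}"
      proof (cases "x \<in> {0<..<t}")
        case True
        have Ix: "I x > 0" using range[of x] x by auto
        from True x have "ennreal (1 / I s) < ennreal (1 / I x)" by (simp add: f_def)
        then have "1 / I s < 1 / I x" using Ix Is by (subst (asm) ennreal_less_iff) auto
        then have "I x < I s" using Ix Is by (simp add: field_simps)
        moreover have "s \<le> x \<Longrightarrow> I s \<le> I x" using mono_onD[OF mono, of s x] s01 x by auto
        ultimately show ?thesis using x by force
      next
        case False
        then show ?thesis using x by (simp add: f_def)
      qed
    qed
    then have "distr_fn f (ennreal (1 / I s)) \<le> emeasure lborel {0<..<s}"
      unfolding distr_fn_def by (rule emeasure_mono) simp
    also have "\<dots> = ennreal s" using s by simp
    finally show ?thesis unfolding rearr_def by (intro Inf_lower) simp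
  qed
  have "(SUP s\<in>{0<..t}. ennreal (I s) * rearr f s) \<le> 1"
  proof (rule SUP_least)
    fix s assume s: "s \<in> {0<..t}"
    have Is: "I s > 0" using range[of s] s t by auto
    have "ennreal (I s) * rearr f s \<le> ennreal (I s) * ennreal (1 / I s)"
      by (rule mult_left_mono[OF up[OF s]]) simp
    also have "\<dots> = 1" using Is by (simp add: ennreal_mult[symmetric])
    finally show "ennreal (I s) * rearr f s \<le> 1" .
  qed
  then have "ennreal C * (SUP s\<in>{0<..t}. ennreal (I s) * rearr f s) \<le> ennreal C"
    using mult_left_mono[of _ 1 "ennreal C"] by simp
  moreover have "ennreal (I t) * maxfn f t \<le> (SUP s\<in>{0<..t}. ennreal (I s) * maxfn f s)"
    using t by (intro SUP_upper) auto
  ultimately have Mt: "ennreal (I t) * maxfn f t \<le> ennreal C"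
    using B fM t by (meson order_trans)
  have "ennreal (1 / I t) * (ennreal (I t) * maxfn f t) \<le> ennreal (1 / I t) * ennreal C"
    by (rule mult_left_mono[OF Mt]) simp
  then have that_ineq: "maxfn f t \<le> ennreal (1 / I t) * ennreal C"
    using It by (simp add: mult.assoc[symmetric] ennreal_mult[symmetric])
  have Mt2: "maxfn f t \<le> ennreal (C / I t)"
  proof -
    have "ennreal (1 / I t) * ennreal C = ennreal (C / I t)"
      using It C by (simp add: ennreal_mult[symmetric])
    with that_ineq show ?thesis by simp
  qed
  have low: "ennreal (1 / I (2 * s)) \<le> rearr f s" if s: "0 < s" "s < t / 2" for s
    unfolding rearr_def
  proof (rule Inf_greatest, rule ccontr)
    fix l assume l: "l \<in> {l. distr_fn f l \<le> ennreal s}" and nl: "\<not> ennreal (1 / I (2 * s)) \<le> l"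
    have lt: "l < ennreal (1 / I (2 * s))" using nl by (simp add: not_le)
    have sub: "{0<..<(2 * s)} \<subseteq> {x\<in>{0<..<1}. l < f x}"
    proof
      fix x assume x: "x \<in> {0<..<(2 * s)}"
      then have xt: "x \<in> {0<..<t}" "x \<in> {0<..<1}" using s t by auto
      have s2: "2 * s \<in> {0<..<1}" using s t by auto
      have Ix: "I x > 0" using range[OF xt(2)] by auto
      have "I x \<le> I (2 * s)" using mono_onD[OF mono xt(2) s2] x by auto
      then have "1 / I (2 * s) \<le> 1 / I x" using Ix by (simp add: frac_le)
      then have "ennreal (1 / I (2 * s)) \<le> f x" using xt by (simp add: f_def ennreal_leI)
      with lt xt show "x \<in> {x\<in>{0<..<1}. l < f x}" by auto
    qed
    have ms: "{x\<in>{0<..<1}. l < f x} \<in> sets lborel"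
    proof -
      have "{x\<in>{0<..<1}. l < f x} = {x\<in>space lborel. x \<in> {0<..<1} \<and> l < f x}" by auto
      also have "\<dots> \<in> sets lborel" by measurable
      finally show ?thesis .
    qed
    have "emeasure lborel {0<..<(2 * s)} \<le> distr_fn f l"
      unfolding distr_fn_def by (rule emeasure_mono[OF sub ms])
    also have "\<dots> \<le> ennreal s" using l by simp
    finally have "ennreal (2 * s) \<le> ennreal s" using s by simp
    then show False using s by (simp add: ennreal_le_iff)
  qed
  have "(\<integral>\<^sup>+ x. f x \<partial>lborel) = ennreal \<bar>2\<bar> * (\<integral>\<^sup>+ x. f (0 + 2 * x) \<partial>lborel)"
    by (rule nn_integral_real_affine[OF fm]) simp
  also have "(\<lambda>x. f (0 + 2 * x)) = (\<lambda>x. ennreal (1 / I (2 * x)) * indicator {0<..<t/2} x)"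
    by (auto simp: f_def indicator_def fun_eq_iff)
  also have "(\<integral>\<^sup>+ x. ennreal (1 / I (2 * x)) * indicator {0<..<t/2} x \<partial>lborel)
      \<le> (\<integral>\<^sup>+ x. rearr f x * indicator {0<..<t} x \<partial>lborel)"
    by (rule nn_integral_mono) (auto simp: indicator_def intro: low)
  also have "(\<integral>\<^sup>+ x. rearr f x * indicator {0<..<t} x \<partial>lborel) = maxfn f t * ennreal t"
    using t by (simp add: maxfn_def ennreal_divide_times)
  also have "\<dots> \<le> ennreal (C / I t) * ennreal t"
    by (rule mult_right_mono[OF Mt2]) simp
  finally have "(\<integral>\<^sup>+ x. f x \<partial>lborel) \<le> ennreal 2 * (ennreal (C / I t) * ennreal t)"
    by (simp add: mult_left_mono)
  also have "\<dots> = ennreal (2 * C * t / I t)"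
  proof -
    have e: "ennreal (2 * (C * t / I t)) = 2 * ennreal (C * t / I t)"
      using C It t by (subst ennreal_mult) auto
    show ?thesis using C It t by (simp add: ennreal_mult[symmetric] e[symmetric])
  qed
  finally show ?thesis by (simp add: f_def)
qed

theorem proposition3p6:
  fixes I :: "real \<Rightarrow> real"
  assumes range: "\<And>t. t \<in> {0<..<1} \<Longrightarrow> I t \<in> {0<..<1}"
    and mono: "mono_on {0<..<1} I"
  shows "((\<exists>C>0. \<forall>t\<in>{0<..<1}.
             (\<integral>\<^sup>+ s. ennreal (1 / I s) * indicator {0<..<t} s \<partial>lborel) \<le> ennreal (C * t / I t))
          \<longleftrightarrow>
          (\<exists>C>0. \<forall>f\<in>Mplus. \<forall>t\<in>{0<..<1}.
             (SUP s\<in>{0<..t}. ennreal (I s) * maxfn f s) \<le> ennreal C * (SUP s\<in>{0<..t}. ennreal (I s) * rearr f s)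
           \<and> (SUP s\<in>{0<..t}. ennreal (I s) * rearr f s) \<le> ennreal C * (SUP s\<in>{0<..t}. ennreal (I s) * maxfn f s)))
       \<and> ((\<exists>C>0. \<forall>t\<in>{0<..<1}.
             (\<integral>\<^sup>+ s. ennreal (1 / I s) * indicator {0<..<t} s \<partial>lborel) \<le> ennreal (C * t / I t))
          \<longrightarrow> space_m I = space_M I
            \<and> (\<exists>C>0. \<forall>f\<in>Mplus. norm_M I f \<le> ennreal C * norm_m I f \<and> norm_m I f \<le> ennreal C * norm_M I f))"
proof -
  have le1: "X \<le> ennreal (C + 1) * X" if "C > 0" for X :: ennreal and C :: real
  proof -
    have "1 * X \<le> ennreal (C + 1) * X" using that by (intro mult_right_mono) (auto simp: ennreal_ge_1)
    then show ?thesis by simp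
  qed
  have le2: "X \<le> ennreal (C + 1) * Y" if "C > 0" "X \<le> ennreal C * Y" for X Y :: ennreal and C :: real
  proof -
    have "ennreal C * Y \<le> ennreal (C + 1) * Y" using that by (intro mult_right_mono) auto
    then show ?thesis using that by simp
  qed
  have rm: "(SUP s\<in>S. ennreal (I s) * rearr f s) \<le> (SUP s\<in>S. ennreal (I s) * maxfn f s)"
    if "S \<subseteq> {0<..}" for S f
    using that by (intro SUP_mono) (auto intro!: bexI mult_left_mono rearr_le_maxfn)
  have AB: "\<exists>C>0. \<forall>f\<in>Mplus. \<forall>t\<in>{0<..<1}.
             (SUP s\<in>{0<..t}. ennreal (I s) * maxfn f s) \<le> ennreal C * (SUP s\<in>{0<..t}. ennreal (I s) * rearr f s)
           \<and> (SUP s\<in>{0<..t}. ennreal (I s) * rearr f s) \<le> ennreal C * (SUP s\<in>{0<..t}. ennreal (I s) * maxfn f s)"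
    if hyp: "\<exists>C>0. \<forall>t\<in>{0<..<1}.
             (\<integral>\<^sup>+ s. ennreal (1 / I s) * indicator {0<..<t} s \<partial>lborel) \<le> ennreal (C * t / I t)"
  proof -
    obtain C where C: "C > 0" and A: "\<forall>t\<in>{0<..<1}.
             (\<integral>\<^sup>+ s. ennreal (1 / I s) * indicator {0<..<t} s \<partial>lborel) \<le> ennreal (C * t / I t)"
      using hyp by blast
    show ?thesis
    proof (intro exI[of _ "C + 1"] conjI ballI)
      fix f and t :: real assume t: "t \<in> {0<..<1}"
      have "(SUP s\<in>{0<..t}. ennreal (I s) * maxfn f s) \<le> ennreal C * (SUP s\<in>{0<..t}. ennreal (I s) * rearr f s)"
        by (rule SUP_least) (rule AtoB_point[OF range mono C A], use t in auto)
      then show "(SUP s\<in>{0<..t}. ennreal (I s) * maxfn f s) \<le> ennreal (C + 1) * (SUP s\<in>{0<..t}. ennreal (I s) * rearr f s)"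
        using le2 C by blast
      have "(SUP s\<in>{0<..t}. ennreal (I s) * rearr f s) \<le> (SUP s\<in>{0<..t}. ennreal (I s) * maxfn f s)"
        by (rule rm) auto
      then show "(SUP s\<in>{0<..t}. ennreal (I s) * rearr f s) \<le> ennreal (C + 1) * (SUP s\<in>{0<..t}. ennreal (I s) * maxfn f s)"
        using le1[OF C] order_trans by blast
    qed (use C in simp)
  qed
  have BA: "\<exists>C>0. \<forall>t\<in>{0<..<1}.
             (\<integral>\<^sup>+ s. ennreal (1 / I s) * indicator {0<..<t} s \<partial>lborel) \<le> ennreal (C * t / I t)"
    if hyp: "\<exists>C>0. \<forall>f\<in>Mplus. \<forall>t\<in>{0<..<1}.
             (SUP s\<in>{0<..t}. ennreal (I s) * maxfn f s) \<le> ennreal C * (SUP s\<in>{0<..t}. ennreal (I s) * rearr f s)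
           \<and> (SUP s\<in>{0<..t}. ennreal (I s) * rearr f s) \<le> ennreal C * (SUP s\<in>{0<..t}. ennreal (I s) * maxfn f s)"
  proof -
    obtain C where C: "C > 0" and B: "\<forall>f\<in>Mplus. \<forall>t\<in>{0<..<1}.
             (SUP s\<in>{0<..t}. ennreal (I s) * maxfn f s) \<le> ennreal C * (SUP s\<in>{0<..t}. ennreal (I s) * rearr f s)"
      using hyp by blast
    show ?thesis
      using BtoA_point[OF range mono C B] C by (intro exI[of _ "2 * C"]) auto
  qed
  have N: "space_m I = space_M I
            \<and> (\<exists>C>0. \<forall>f\<in>Mplus. norm_M I f \<le> ennreal C * norm_m I f \<and> norm_m I f \<le> ennreal C * norm_M I f)"
    if hyp: "\<exists>C>0. \<forall>t\<in>{0<..<1}.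
             (\<integral>\<^sup>+ s. ennreal (1 / I s) * indicator {0<..<t} s \<partial>lborel) \<le> ennreal (C * t / I t)"
  proof -
    obtain C where C: "C > 0" and A: "\<forall>t\<in>{0<..<1}.
             (\<integral>\<^sup>+ s. ennreal (1 / I s) * indicator {0<..<t} s \<partial>lborel) \<le> ennreal (C * t / I t)"
      using hyp by blast
    have n1: "norm_M I f \<le> ennreal C * norm_m I f" for f
      unfolding norm_M_def
    proof (rule SUP_least)
      fix t :: real assume t: "t \<in> {0<..<1}"
      have "ennreal (I t) * maxfn f t \<le> ennreal C * (SUP u\<in>{0<..t}. ennreal (I u) * rearr f u)"
        using t by (intro AtoB_point[OF range mono C A]) auto
      also have "\<dots> \<le> ennreal C * norm_m I f"
        unfolding norm_m_def using t by (intro mult_left_mono SUP_subset_mono) auto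
      finally show "ennreal (I t) * maxfn f t \<le> ennreal C * norm_m I f" .
    qed
    have n2: "norm_m I f \<le> norm_M I f" for f
      unfolding norm_m_def norm_M_def by (rule rm) auto
    have "space_m I = space_M I"
    proof -
      have "norm_m I f < \<infinity> \<longleftrightarrow> norm_M I f < \<infinity>" for f
      proof
        assume "norm_m I f < \<infinity>"
        then have "ennreal C * norm_m I f < \<infinity>" by (simp add: ennreal_mult_less_top)
        then show "norm_M I f < \<infinity>" using n1[of f] by (meson le_less_trans)
      next
        assume "norm_M I f < \<infinity>"
        then show "norm_m I f < \<infinity>" using n2[of f] by (meson le_less_trans)
      qed
      then show ?thesis unfolding space_m_def space_M_def by auto
    qed
    moreover have "\<exists>C>0. \<forall>f\<in>Mplus. norm_M I f \<le> ennreal C * norm_m I f \<and> norm_m I f \<le> ennreal C * norm_M I f"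
      using C n1 n2 le1[OF C] le2[OF C] order_trans by (intro exI[of _ "C + 1"]) (auto, blast+)
    ultimately show ?thesis by blast
  qed
  show ?thesis using AB BA N by blast
qed

end
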